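(* Let $A$ be an integral domain and let $B=A[u]$ be an overring of $A$ that is flat over $A$, where $u$ is a unit of $B$. Then there is a positive integer $m$ such that $u^{-r}\in A$ for all integers $r\ge m$. Consequently $B$ is a localization of $A$.
   Context: For an integral domain $A$ with field of fractions $K$, an overring of $A$ is a subring of $K$ containing $A$; it is a localization of $A$ if it equals $S^{-1}A$ for some multiplicatively closed set $S$ of nonzero elements of $A$. *)

theory Defs
  imports Main
begin

text \<open>All rings are modelled as subsets of an ambient field of type 'a.
  A subring of a field is an integral domain; its field of fractions is
  realised inside the ambient field as frac_field A.\<close>

definition subring_of :: "'a::field set \<Rightarrow> bool" where
  "subring_of R \<longleftrightarrow> 0 \<in> R \<and> 1 \<in> R \<and>
     (\<forall>x\<in>R. \<forall>y\<in>R. x + y \<in> R \<and> x - y \<in> R \<and> x * y \<in> R)"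

definition frac_field :: "'a::field set \<Rightarrow> 'a set" where
  "frac_field A = {a / b | a b. a \<in> A \<and> b \<in> A \<and> b \<noteq> 0}"

definition overring :: "'a::field set \<Rightarrow> 'a set \<Rightarrow> bool" where
  "overring A B \<longleftrightarrow> subring_of B \<and> A \<subseteq> B \<and> B \<subseteq> frac_field A"

definition adjoin :: "'a::field set \<Rightarrow> 'a \<Rightarrow> 'a set" where
  "adjoin A u = {(\<Sum>i\<le>n. c i * u ^ i) | n c. \<forall>i. c i \<in> A}"

definition is_unit_in :: "'a::field set \<Rightarrow> 'a \<Rightarrow> bool" where
  "is_unit_in B u \<longleftrightarrow> u \<in> B \<and> (\<exists>v\<in>B. u * v = 1)"

text \<open>Flatness of B as an A-module, via the equational criterion of flatness
  (Stacks Project, Tag 00HK): every relation among elements of B with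
  coefficients in A is a consequence of relations in A.\<close>
definition flat_over :: "'a::field set \<Rightarrow> 'a set \<Rightarrow> bool" where
  "flat_over A B \<longleftrightarrow>
     (\<forall>(n::nat) (a::nat \<Rightarrow> 'a) (b::nat \<Rightarrow> 'a).
        (\<forall>i<n. a i \<in> A) \<and> (\<forall>i<n. b i \<in> B) \<and> (\<Sum>i<n. a i * b i) = 0 \<longrightarrow>
        (\<exists>(k::nat) (c::nat \<Rightarrow> nat \<Rightarrow> 'a) (d::nat \<Rightarrow> 'a).
           (\<forall>i<n. \<forall>j<k. c i j \<in> A) \<and> (\<forall>j<k. d j \<in> B) \<and>
           (\<forall>i<n. b i = (\<Sum>j<k. c i j * d j)) \<and>
           (\<forall>j<k. (\<Sum>i<n. a i * c i j) = 0)))"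

definition mult_closed_nonzero :: "'a::field set \<Rightarrow> 'a set \<Rightarrow> bool" where
  "mult_closed_nonzero A S \<longleftrightarrow> S \<subseteq> A - {0} \<and> 1 \<in> S \<and> (\<forall>s\<in>S. \<forall>t\<in>S. s * t \<in> S)"

definition is_localization :: "'a::field set \<Rightarrow> 'a set \<Rightarrow> bool" where
  "is_localization A B \<longleftrightarrow>
     (\<exists>S. mult_closed_nonzero A S \<and> B = {a / s | a s. a \<in> A \<and> s \<in> S})"

end

theory Submission
  imports Defs
begin

inductive_set in_IB :: "'a::field set \<Rightarrow> 'a set \<Rightarrow> 'a set" for I B where
  zero: "0 \<in> in_IB I B"
| gen: "c \<in> I \<Longrightarrow> d \<in> B \<Longrightarrow> c * d \<in> in_IB I B"
| add: "x \<in> in_IB I B \<Longrightarrow> y \<in> in_IB I B \<Longrightarrow> x + y \<in> in_IB I B"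

lemma subring_sum:
  assumes "subring_of R" "finite S" "\<forall>i\<in>S. f i \<in> R"
  shows "sum f S \<in> R"
  using assms(2,3)
proof (induction S rule: finite_induct)
  case empty then show ?case using assms(1) by (simp add: subring_of_def)
next
  case (insert x F) then show ?case using assms(1) by (simp add: subring_of_def)
qed

lemma IB_mult:
  assumes B: "subring_of B" and x: "x \<in> in_IB I B" and y: "y \<in> in_IB J B"
    and K: "\<forall>a\<in>I. \<forall>b\<in>J. a * b \<in> K"
  shows "x * y \<in> in_IB K B"
  using x
proof induction
  case zero then show ?case by (simp add: in_IB.zero)
next
  case (gen c d)
  from y show ?case
  proof induction
    case zero then show ?case by (simp add: in_IB.zero)
  next
    case (gen c' d')
    have "c * d * (c' * d') = (c * c') * (d * d')" by (simp add: algebra_simps)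
    moreover have "c * c' \<in> K" using K gen \<open>c \<in> I\<close> by blast
    moreover have "d * d' \<in> B" using B gen \<open>d \<in> B\<close> by (simp add: subring_of_def)
    ultimately show ?case by (metis in_IB.gen)
  next
    case (add y1 y2)
    then show ?case by (simp add: distrib_left in_IB.add)
  qed
next
  case (add x1 x2)
  then show ?case by (simp add: distrib_right in_IB.add)
qed

lemma IB_sum:
  fixes k :: nat
  assumes "\<forall>j<k. c j \<in> I \<and> d j \<in> B"
  shows "(\<Sum>j<k. c j * d j) \<in> in_IB I B"
  using assms
proof (induction k)
  case 0 then show ?case by (simp add: in_IB.zero)
next
  case (Suc k) then show ?case by (simp add: in_IB.add in_IB.gen)
qed

lemma flat_step:
  assumes A: "subring_of A" and fl: "flat_over A B" and yB: "y \<in> B"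
    and yF: "y \<in> frac_field A" and oneB: "1 \<in> B"
  shows "1 \<in> in_IB {c \<in> A. c * y \<in> A} B"
proof -
  obtain p q where pq: "y = p / q" "p \<in> A" "q \<in> A" "q \<noteq> 0"
    using yF unfolding frac_field_def by blast
  define a where "a = (\<lambda>i::nat. if i = 0 then p else - q)"
  define b where "b = (\<lambda>i::nat. if i = 0 then 1 else y)"
  have mq: "- q \<in> A" using A pq(3) unfolding subring_of_def by (metis diff_0)
  have "(\<forall>i<2. a i \<in> A) \<and> (\<forall>i<2. b i \<in> B) \<and> (\<Sum>i<2. a i * b i) = 0"
    using pq mq yB oneB by (simp add: a_def b_def numeral_2_eq_2 lessThan_Suc)
  note ex = fl[unfolded flat_over_def, rule_format, OF this]
  obtain k :: nat and c :: "nat \<Rightarrow> nat \<Rightarrow> 'a" and d where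
    c: "\<forall>i<2. \<forall>j<k. c i j \<in> A" and d: "\<forall>j<k. d j \<in> B"
    and bs: "\<forall>i<2. b i = (\<Sum>j<k. c i j * d j)"
    and rel: "\<forall>j<k. (\<Sum>i<2. a i * c i j) = 0"
    using ex by blast
  have "\<forall>j<k. c 0 j \<in> {c \<in> A. c * y \<in> A} \<and> d j \<in> B"
  proof (intro allI impI conjI)
    fix j assume j: "j < k"
    show "d j \<in> B" using d j by blast
    have c0: "c 0 j \<in> A" using c j by simp
    have "p * c 0 j - q * c 1 j = 0"
      using rel j by (simp add: a_def numeral_2_eq_2 lessThan_Suc)
    moreover have qy: "q * y = p" using pq(1,4) by simp
    moreover have "q * (c 0 j * y) = c 0 j * (q * y)" by (simp add: algebra_simps)
    ultimately have "q * (c 0 j * y) = q * c 1 j" by (simp add: algebra_simps)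
    then have "c 0 j * y = c 1 j" using pq(4) by simp
    moreover have "c 1 j \<in> A" using c j by simp
    ultimately show "c 0 j \<in> {c \<in> A. c * y \<in> A}" using c0 by simp
  qed
  moreover have "1 = (\<Sum>j<k. c 0 j * d j)" using bs[rule_format, of 0] by (simp add: b_def)
  ultimately show ?thesis using IB_sum[of k "c 0" "{c \<in> A. c * y \<in> A}" d B] by simp
qed

lemma integral_step:
  assumes A: "subring_of A" and w: "w = (\<Sum>i\<le>n. e i * u ^ i)" and e: "\<forall>i. e i \<in> A"
    and uw: "u * w = 1" and c: "\<forall>i\<le>n. c * w ^ i \<in> A"
  shows "c * w ^ t \<in> A"
proof (induction t rule: less_induct)
  case (less t)
  show ?case
  proof (cases "t \<le> n")
    case True then show ?thesis using c by blast
  next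
    case False
    then obtain s where s: "t = Suc s" "n \<le> s" by (cases t) auto
    have pw: "w ^ s * u ^ i = w ^ (s - i)" if "i \<le> s" for i
    proof -
      have "w ^ s = w ^ (s - i) * w ^ i" using that by (simp add: power_add[symmetric])
      then have "w ^ s * u ^ i = w ^ (s - i) * (u * w) ^ i" by (simp add: power_mult_distrib algebra_simps)
      then show ?thesis using uw by simp
    qed
    have "c * w ^ t = c * w ^ s * w" using s by (simp add: algebra_simps)
    also have "\<dots> = c * w ^ s * (\<Sum>i\<le>n. e i * u ^ i)" by (metis w)
    also have "\<dots> = (\<Sum>i\<le>n. c * w ^ s * (e i * u ^ i))" by (simp add: sum_distrib_left)
    also have "\<dots> = (\<Sum>i\<le>n. e i * (c * (w ^ s * u ^ i)))"
      by (intro sum.cong) (simp_all add: algebra_simps)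
    also have "\<dots> = (\<Sum>i\<le>n. e i * (c * w ^ (s - i)))"
      using pw s(2) by (intro sum.cong) auto
    also have "\<dots> \<in> A"
    proof (rule subring_sum[OF A])
      show "\<forall>i\<in>{..n}. e i * (c * w ^ (s - i)) \<in> A"
      proof
        fix i assume "i \<in> {..n}"
        have "c * w ^ (s - i) \<in> A" using less s by simp
        then show "e i * (c * w ^ (s - i)) \<in> A" using A e unfolding subring_of_def by blast
      qed
    qed simp
    finally show ?thesis .
  qed
qed

lemma pw_lemma:
  fixes u w :: "'a::field"
  assumes uw: "u * w = 1" and "i \<le> s"
  shows "w ^ s * u ^ i = w ^ (s - i)"
proof -
  have "w ^ s = w ^ (s - i) * w ^ i" using assms(2) by (simp add: power_add[symmetric])
  then have "w ^ s * u ^ i = w ^ (s - i) * (u * w) ^ i" by (simp add: power_mult_distrib algebra_simps)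
  then show ?thesis using uw by simp
qed

lemma final_step:
  assumes A: "subring_of A" and x: "x \<in> in_IB I (adjoin A u)"
    and I: "I \<subseteq> {c. \<forall>t. c * w ^ t \<in> A}" and uw: "u * w = 1"
  shows "\<exists>D. \<forall>r\<ge>D. x * w ^ r \<in> A"
  using x
proof induction
  case zero then show ?case using A by (simp add: subring_of_def)
next
  case (gen c d)
  obtain n e where d: "d = (\<Sum>i\<le>n. e i * u ^ i)" and e: "\<forall>i. e i \<in> A"
    using gen(2) unfolding adjoin_def by blast
  have "\<forall>r\<ge>n. c * d * w ^ r \<in> A"
  proof (intro allI impI)
    fix r assume r: "n \<le> r"
    have "c * d * w ^ r = (\<Sum>i\<le>n. c * w ^ r * (e i * u ^ i))"
      unfolding d by (simp add: sum_distrib_left algebra_simps)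
    also have "\<dots> = (\<Sum>i\<le>n. e i * (c * w ^ (r - i)))"
    proof (intro sum.cong refl)
      fix i assume "i \<in> {..n}"
      then have "w ^ r * u ^ i = w ^ (r - i)" using pw_lemma[OF uw] r by simp
      then show "c * w ^ r * (e i * u ^ i) = e i * (c * w ^ (r - i))"
        by (metis mult.assoc mult.commute)
    qed
    also have "\<dots> \<in> A"
    proof (rule subring_sum[OF A])
      show "\<forall>i\<in>{..n}. e i * (c * w ^ (r - i)) \<in> A"
      proof
        fix i assume "i \<in> {..n}"
        have "c * w ^ (r - i) \<in> A" using I gen(1) by blast
        then show "e i * (c * w ^ (r - i)) \<in> A" using A e unfolding subring_of_def by blast
      qed
    qed simp
    finally show "c * d * w ^ r \<in> A" .
  qed
  then show ?case by blast
next
  case (add x1 x2)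
  then obtain D1 D2 where "\<forall>r\<ge>D1. x1 * w ^ r \<in> A" "\<forall>r\<ge>D2. x2 * w ^ r \<in> A" by blast
  then have "\<forall>r\<ge>max D1 D2. (x1 + x2) * w ^ r \<in> A"
    using A by (simp add: distrib_right subring_of_def)
  then show ?case by blast
qed

theorem theorem4p1:
  fixes A :: "'a::field set" and u :: 'a
  assumes "subring_of A"
    and "overring A (adjoin A u)"
    and "flat_over A (adjoin A u)"
    and "is_unit_in (adjoin A u) u"
  shows "(\<exists>m::nat. m > 0 \<and> (\<forall>r\<ge>m. inverse u ^ r \<in> A)) \<and> is_localization A (adjoin A u)"
proof -
  define B where "B = adjoin A u"
  note A = assms(1)
  have Bs: "subring_of B" and AB: "A \<subseteq> B" and BF: "B \<subseteq> frac_field A"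
    using assms(2) unfolding B_def overring_def by auto
  obtain v where vB: "v \<in> B" and uv: "u * v = 1"
    using assms(4) unfolding B_def is_unit_in_def by blast
  have u0: "u \<noteq> 0" using uv by auto
  define w where "w = inverse u"
  have vw: "v = w" using uv u0 unfolding w_def by (metis inverse_unique)
  have uw: "u * w = 1" using u0 unfolding w_def by simp
  have wB: "w \<in> B" using vB vw by simp
  obtain n e where wd: "w = (\<Sum>i\<le>n. e i * u ^ i)" and e: "\<forall>i. e i \<in> A"
    using wB unfolding B_def adjoin_def by blast
  have oneB: "1 \<in> B" using Bs by (simp add: subring_of_def)
  have oneA: "1 \<in> A" using A by (simp add: subring_of_def)
  define I where "I = (\<lambda>N. {c \<in> A. \<forall>i\<le>N. c * w ^ i \<in> A})"
  have step1: "1 \<in> in_IB {c \<in> A. c * w \<in> A} B"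
    using flat_step[OF A assms(3)[folded B_def] wB _ oneB] wB BF by blast
  have IN: "1 \<in> in_IB (I N) B" for N
  proof (induction N)
    case 0
    have "1 * 1 \<in> in_IB (I 0) B" using oneA oneB by (intro in_IB.gen) (auto simp: I_def)
    then show ?case by simp
  next
    case (Suc N)
    have "\<forall>a\<in>I N. \<forall>b\<in>{c \<in> A. c * w \<in> A}. a * b \<in> I (Suc N)"
    proof (intro ballI)
      fix a b assume a: "a \<in> I N" and b: "b \<in> {c \<in> A. c * w \<in> A}"
      have ab: "a * b \<in> A" using a b A unfolding I_def subring_of_def by blast
      have "a * b * w ^ i \<in> A" if i: "i \<le> Suc N" for i
      proof (cases "i \<le> N")
        case True
        then have "a * w ^ i \<in> A" using a unfolding I_def by blast
        then have "(a * w ^ i) * b \<in> A" using b A unfolding subring_of_def by blast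
        then show ?thesis by (simp add: algebra_simps)
      next
        case False
        then have ii: "i = Suc N" using i by simp
        have "a * w ^ N \<in> A" using a unfolding I_def by blast
        then have "(a * w ^ N) * (b * w) \<in> A" using b A unfolding subring_of_def by blast
        then show ?thesis using ii by (simp add: algebra_simps)
      qed
      then show "a * b \<in> I (Suc N)" using ab unfolding I_def by blast
    qed
    from IB_mult[OF Bs Suc step1 this] show ?case by simp
  qed
  have Isub: "I n \<subseteq> {c. \<forall>t. c * w ^ t \<in> A}"
  proof
    fix c assume "c \<in> I n"
    then have "\<forall>i\<le>n. c * w ^ i \<in> A" unfolding I_def by blast
    then show "c \<in> {c. \<forall>t. c * w ^ t \<in> A}"
      using integral_step[OF A wd e uw] by blast
  qed
  obtain D where D: "\<forall>r\<ge>D. 1 * w ^ r \<in> A"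
    using final_step[OF A IN[of n, unfolded B_def] Isub uw] by blast
  define m where "m = Suc D"
  have wm: "\<forall>r\<ge>m. w ^ r \<in> A" using D unfolding m_def by simp
  have part1: "\<exists>m::nat. m > 0 \<and> (\<forall>r\<ge>m. inverse u ^ r \<in> A)"
    using wm unfolding m_def w_def by blast
  define S where "S = {w ^ (m * k) | k. True}"
  have w0: "w \<noteq> 0" using u0 unfolding w_def by simp
  have mc: "mult_closed_nonzero A S"
    unfolding mult_closed_nonzero_def
  proof (intro conjI)
    show "S \<subseteq> A - {0}"
    proof
      fix s assume "s \<in> S"
      then obtain k where k: "s = w ^ (m * k)" unfolding S_def by blast
      show "s \<in> A - {0}"
      proof (cases "k = 0")
        case True then show ?thesis using k oneA by simp
      next
        case False
        then have "m * k \<ge> m" by simp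
        then show ?thesis using k wm w0 by simp
      qed
    qed
    show "1 \<in> S" unfolding S_def by (rule CollectI, rule exI[of _ 0]) simp
    show "\<forall>s\<in>S. \<forall>t\<in>S. s * t \<in> S"
      unfolding S_def by (auto simp: power_add[symmetric] distrib_left[symmetric])
  qed
  have "B = {a / s | a s. a \<in> A \<and> s \<in> S}"
  proof
    show "B \<subseteq> {a / s | a s. a \<in> A \<and> s \<in> S}"
    proof
      fix b assume "b \<in> B"
      then obtain n' e' where bd: "b = (\<Sum>i\<le>n'. e' i * u ^ i)" and e': "\<forall>i. e' i \<in> A"
        unfolding B_def adjoin_def by blast
      define s where "s = w ^ (m * Suc n')"
      have sS: "s \<in> S" unfolding S_def s_def by blast
      have "b * s = (\<Sum>i\<le>n'. e' i * (w ^ (m * Suc n') * u ^ i))"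
        unfolding bd s_def sum_distrib_right by (intro sum.cong refl) (simp add: algebra_simps)
      also have "\<dots> = (\<Sum>i\<le>n'. e' i * w ^ (m * Suc n' - i))"
      proof (intro sum.cong refl)
        fix i assume "i \<in> {..n'}"
        then have "i \<le> m * Suc n'" using m_def by simp
        then show "e' i * (w ^ (m * Suc n') * u ^ i) = e' i * w ^ (m * Suc n' - i)"
          using pw_lemma[OF uw] by simp
      qed
      also have "\<dots> \<in> A"
      proof (rule subring_sum[OF A])
        show "\<forall>i\<in>{..n'}. e' i * w ^ (m * Suc n' - i) \<in> A"
        proof
          fix i assume "i \<in> {..n'}"
          then have "m * Suc n' - i \<ge> m" using m_def by (simp add: algebra_simps)
          then have "w ^ (m * Suc n' - i) \<in> A" using wm by blast
          then show "e' i * w ^ (m * Suc n' - i) \<in> A" using A e' unfolding subring_of_def by blast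
        qed
      qed simp
      finally have bsA: "b * s \<in> A" .
      have "b = (b * s) / s" using w0 unfolding s_def by simp
      then show "b \<in> {a / s | a s. a \<in> A \<and> s \<in> S}" using bsA sS by blast
    qed
    show "{a / s | a s. a \<in> A \<and> s \<in> S} \<subseteq> B"
    proof
      fix x assume "x \<in> {a / s | a s. a \<in> A \<and> s \<in> S}"
      then obtain a k where a: "a \<in> A" and x: "x = a / w ^ (m * k)" unfolding S_def by blast
      define j where "j = m * k"
      have "x = a * u ^ j" using x u0 unfolding j_def w_def by (simp add: power_inverse divide_inverse)
      also have "\<dots> = (\<Sum>i\<le>j. if i = j then a * u ^ i else 0)"
        by simp
      also have "\<dots> = (\<Sum>i\<le>j. (if i = j then a else 0) * u ^ i)"
        by (rule sum.cong) auto
      also have "\<dots> \<in> B" unfolding B_def adjoin_def using a A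
        by (intro CollectI exI[of _ j] exI[of _ "\<lambda>i. if i = j then a else 0"]) (auto simp: subring_of_def)
      finally show "x \<in> B" .
    qed
  qed
  then have "is_localization A B" unfolding is_localization_def using mc by blast
  then show ?thesis using part1 unfolding B_def by blast
qed

end
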